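(* Let $\mathbb{M}^2$ be a strictly convex normed plane and let $S$ be a set of $n$ points of $\mathbb{M}^2$. For any $\epsilon>0$ there is a point set $S'$ in bijective correspondence with $S$ such that (1) each point of $S'$ is within distance $\epsilon$ (in the norm) of its corresponding point of $S$, and (2) the distances among the points of $S'$ are all distinct.
   Context: $\mathbb{M}^2$ is $\mathbb{R}^2$ with a norm $\|\cdot\|$; it is strictly convex if its unit sphere contains no nondegenerate line segment. *)

theory Defs
  imports "HOL-Analysis.Analysis"
begin

text \<open>A norm on the plane \<open>real^2\<close> (the normed plane \<open>M^2\<close> is \<open>R^2\<close> equipped with
  an arbitrary norm \<open>N\<close>, not necessarily the Euclidean one).\<close>
definition is_norm :: "(real^2 \<Rightarrow> real) \<Rightarrow> bool" where
  "is_norm N \<longleftrightarrow>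
     (\<forall>x. 0 \<le> N x) \<and>
     (\<forall>x. N x = 0 \<longleftrightarrow> x = 0) \<and>
     (\<forall>c x. N (c *\<^sub>R x) = \<bar>c\<bar> * N x) \<and>
     (\<forall>x y. N (x + y) \<le> N x + N y)"

definition strictly_convex_norm :: "(real^2 \<Rightarrow> real) \<Rightarrow> bool" where
  "strictly_convex_norm N \<longleftrightarrow>
     \<not> (\<exists>x y. x \<noteq> y \<and> closed_segment x y \<subseteq> {z. N z = 1})"

end

theory Submission
  imports Defs
begin

lemma nrm_neg: "is_norm N \<Longrightarrow> N (a - b) = N (b - a)"
proof -
  assume n: "is_norm N"
  have "N ((-1::real) *\<^sub>R (a - b)) = \<bar>-1::real\<bar> * N (a - b)"
    using n unfolding is_norm_def by blast
  then show ?thesis by (simp add: algebra_simps)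
qed

lemma nrm_comb:
  assumes n: "is_norm N" and "0 \<le> u" "0 \<le> v"
  shows "N (u *\<^sub>R x + v *\<^sub>R y) \<le> u * N x + v * N y"
proof -
  have "N (u *\<^sub>R x + v *\<^sub>R y) \<le> N (u *\<^sub>R x) + N (v *\<^sub>R y)"
    using n unfolding is_norm_def by blast
  also have "\<dots> = u * N x + v * N y"
    using n assms unfolding is_norm_def by simp
  finally show ?thesis .
qed

lemma nrm_convex: "is_norm N \<Longrightarrow> convex_on UNIV N"
  unfolding convex_on_def using nrm_comb by auto

lemma nrm_cont: "is_norm N \<Longrightarrow> continuous_on UNIV N"
  by (rule convex_on_continuous) (auto intro: nrm_convex)

lemma three_pts:
  assumes n: "is_norm N" and sc: "strictly_convex_norm N"
    and y2: "y2 = (1 - s) *\<^sub>R y1 + s *\<^sub>R y3" and s: "0 < s" "s < 1"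
    and ne: "y1 \<noteq> y3" and c: "c > 0"
    and e1: "N y1 = c" and e2: "N y2 = c" and e3: "N y3 = c"
  shows False
proof -
  have y12: "y1 \<noteq> y2"
  proof
    assume eq: "y1 = y2"
    have "y2 - y1 = s *\<^sub>R (y3 - y1)" using y2 by (simp add: algebra_simps)
    then have "s *\<^sub>R (y3 - y1) = 0" using eq by simp
    then show False using s ne by auto
  qed
  have key: "N z = c" if z: "z \<in> closed_segment y1 y2" for z
  proof -
    obtain t where t: "0 \<le> t" "t \<le> 1" "z = (1 - t) *\<^sub>R y1 + t *\<^sub>R y2"
      using z unfolding closed_segment_def by auto
    have zz: "z = (1 - t * s) *\<^sub>R y1 + (t * s) *\<^sub>R y3"
      using t(3) y2 by (simp add: algebra_simps)
    have "N z \<le> (1 - t * s) * N y1 + (t * s) * N y3"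
      unfolding zz using t s
      by (intro nrm_comb[OF n]) (auto simp: mult_le_one)
    then have le: "N z \<le> c" using e1 e3 by (simp add: algebra_simps)
    \<comment> \<open>y2 lies between z and y3\<close>
    define m where "m = (1 - s) / (1 - t * s)"
    have ts: "t * s \<le> s" using mult_right_mono[of t 1 s] t s by simp
    have ts0: "0 \<le> t * s" using t s by simp
    have den: "1 - t * s > 0" using ts s by linarith
    have m0: "0 < m" unfolding m_def using den s by simp
    have m1: "m \<le> 1" unfolding m_def using divide_le_eq_1_pos[OF den, of "1 - s"] ts by linarith
    have mm: "m * (1 - t * s) = 1 - s" unfolding m_def using den by simp
    have mid: "m * (t * s) + 1 - m = s"
      using mm by (simp add: right_diff_distrib)
    define w where "w = y3 - y1"
    have zw: "z = y1 + (t * s) *\<^sub>R w" unfolding zz w_def by (simp add: algebra_simps)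
    have y2w: "y2 = y1 + s *\<^sub>R w" unfolding y2 w_def by (simp add: algebra_simps)
    have y3w: "y3 = y1 + w" unfolding w_def by simp
    have "m *\<^sub>R z + (1 - m) *\<^sub>R y3 = y1 + (m * (t * s) + 1 - m) *\<^sub>R w"
      unfolding zw y3w by (simp add: algebra_simps)
    then have "y2 = m *\<^sub>R z + (1 - m) *\<^sub>R y3" using mid y2w by simp
    then have "c \<le> m * N z + (1 - m) * N y3"
      using nrm_comb[OF n, of m "1 - m" z y3] m0 m1 e2 by simp
    then have "c \<le> m * N z + (1 - m) * c" using e3 by simp
    then have "m * c \<le> m * N z" by (simp add: algebra_simps)
    then have "c \<le> N z" using m0 by simp
    with le show ?thesis by simp
  qed
  have "closed_segment ((1/c) *\<^sub>R y1) ((1/c) *\<^sub>R y2) \<subseteq> {z. N z = 1}"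
  proof
    fix w assume "w \<in> closed_segment ((1/c) *\<^sub>R y1) ((1/c) *\<^sub>R y2)"
    then have "w \<in> (\<lambda>x. (1/c) *\<^sub>R x) ` closed_segment y1 y2"
      by (simp add: closed_segment_linear_image[symmetric] linear_scaleR)
    then obtain z where z: "z \<in> closed_segment y1 y2" "w = (1/c) *\<^sub>R z" by auto
    have "N w = (1/c) * N z" using n c z(2) unfolding is_norm_def by simp
    then show "w \<in> {z. N z = 1}" using key[OF z(1)] c by simp
  qed
  moreover have "(1/c) *\<^sub>R y1 \<noteq> (1/c) *\<^sub>R y2" using y12 c by simp
  ultimately show False using sc unfolding strictly_convex_norm_def by blast
qed

lemma nrm_cont_shift: "is_norm N \<Longrightarrow> continuous_on UNIV (\<lambda>q. N (q - a))"
  by (rule continuous_on_compose2[OF nrm_cont]) (auto intro: continuous_intros)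

lemma nrm_zero: "is_norm N \<Longrightarrow> N x = 0 \<longleftrightarrow> x = 0"
  unfolding is_norm_def by blast

lemma nrm_scale: "is_norm N \<Longrightarrow> N (c *\<^sub>R x) = \<bar>c\<bar> * N x"
  unfolding is_norm_def by blast

lemma bisector_step:
  assumes n: "is_norm N" and sc: "strictly_convex_norm N" and ab: "a \<noteq> b"
    and s: "0 < s" "s < 1"
    and e1: "N (q - a) = N (q - b)"
    and e2: "N (q + s *\<^sub>R (b - a) - a) = N (q + s *\<^sub>R (b - a) - b)"
  shows False
proof -
  define u where "u = b - a"
  define x where "x = q - a"
  define c where "c = N x"
  have x0: "x \<noteq> 0"
  proof
    assume "x = 0"
    then have "q = a" unfolding x_def by simp
    then have "N (a - b) = 0" using e1 nrm_zero[OF n, of 0] by simp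
    then show False using ab nrm_zero[OF n] by simp
  qed
  have cn: "N x \<noteq> 0" using x0 nrm_zero[OF n] by simp
  have cp: "N x \<ge> 0" using n unfolding is_norm_def by blast
  have c: "c > 0" using cn cp unfolding c_def by simp
  define y1 where "y1 = x - u"
  define y2 where "y2 = x + (s - 1) *\<^sub>R u"
  define y4 where "y4 = x + s *\<^sub>R u"
  have Ny1: "N y1 = c" unfolding y1_def c_def x_def u_def using e1 by simp
  have Ny24: "N y2 = N y4" unfolding y2_def y4_def x_def u_def using e2
    by (simp add: algebra_simps)
  have y2c: "y2 = (1 - s) *\<^sub>R y1 + s *\<^sub>R x"
    unfolding y2_def y1_def by (simp add: algebra_simps)
  have "N y2 \<le> (1 - s) * N y1 + s * N x"
    unfolding y2c using s by (intro nrm_comb[OF n]) auto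
  then have le: "N y2 \<le> c" using Ny1 c_def by (simp add: algebra_simps)
  have xc: "x = s *\<^sub>R y2 + (1 - s) *\<^sub>R y4"
    unfolding y2_def y4_def by (simp add: algebra_simps)
  have "N x \<le> s * N y2 + (1 - s) * N y4"
    using xc nrm_comb[OF n, of s "1 - s" y2 y4] s by simp
  then have ge: "c \<le> N y2" using Ny24 c_def by (simp add: algebra_simps)
  have u0: "u \<noteq> 0" using ab unfolding u_def by simp
  have yx: "y1 \<noteq> x" unfolding y1_def using u0 by simp
  have Nx: "N x = c" unfolding c_def ..
  have "N y2 = c" using le ge by linarith
  then show False using three_pts[OF n sc y2c s(1) s(2) yx c Ny1 _ Nx] by blast
qed

lemma bisector_interior:
  assumes n: "is_norm N" and sc: "strictly_convex_norm N" and ab: "a \<noteq> b"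
  shows "interior {q. N (q - a) = N (q - b)} = {}"
proof (rule ccontr)
  assume "interior {q. N (q - a) = N (q - b)} \<noteq> {}"
  then obtain z where "z \<in> interior {q. N (q - a) = N (q - b)}" by blast
  then obtain r where r: "r > 0" "ball z r \<subseteq> {q. N (q - a) = N (q - b)}"
    by (auto simp: mem_interior)
  define u where "u = b - a"
  have u0: "norm u > 0" using ab unfolding u_def by simp
  define s where "s = min (1/2) (r / (2 * norm u))"
  have s: "0 < s" "s < 1" unfolding s_def using r u0 by auto
  have "norm (s *\<^sub>R u) = s * norm u" using s by simp
  also have "\<dots> \<le> r / (2 * norm u) * norm u"
    by (rule mult_right_mono) (auto simp: s_def)
  also have "\<dots> < r" using u0 r by simp
  finally have "z + s *\<^sub>R u \<in> ball z r" by (simp add: dist_norm)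
  then have "N (z + s *\<^sub>R (b - a) - a) = N (z + s *\<^sub>R (b - a) - b)"
    using r unfolding u_def by auto
  moreover have "N (z - a) = N (z - b)" using r(2) centre_in_ball[of z r] r(1) by blast
  ultimately show False using bisector_step[OF n sc ab s] by blast
qed

lemma sphere_interior:
  assumes n: "is_norm N" and r0: "r > 0"
  shows "interior {q. N (q - a) = r} = {}"
proof (rule ccontr)
  assume "interior {q. N (q - a) = r} \<noteq> {}"
  then obtain z where "z \<in> interior {q. N (q - a) = r}" by blast
  then obtain e where e: "e > 0" "ball z e \<subseteq> {q. N (q - a) = r}"
    by (auto simp: mem_interior)
  have z: "N (z - a) = r" using e(2) centre_in_ball[of z e] e(1) by blast
  have "z \<noteq> a"
  proof
    assume "z = a"
    then have "N (z - a) = 0" using nrm_zero[OF n, of 0] by simp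
    then show False using z r0 by simp
  qed
  then have za: "norm (z - a) > 0" by simp
  define s where "s = min 1 (e / (2 * norm (z - a)))"
  have s: "0 < s" unfolding s_def using e za by auto
  have "norm (s *\<^sub>R (z - a)) = s * norm (z - a)" using s by simp
  also have "\<dots> \<le> e / (2 * norm (z - a)) * norm (z - a)"
    by (rule mult_right_mono) (auto simp: s_def)
  also have "\<dots> < e" using za e by simp
  finally have "z + s *\<^sub>R (z - a) \<in> ball z e" by (simp add: dist_norm)
  then have "N (z + s *\<^sub>R (z - a) - a) = r" using e(2) by blast
  moreover have "z + s *\<^sub>R (z - a) - a = (1 + s) *\<^sub>R (z - a)" by (simp add: algebra_simps)
  ultimately have "\<bar>1 + s\<bar> * r = r" using nrm_scale[OF n] z by metis
  then show False using s r0 by simp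
qed

lemma interior_finite_Union:
  assumes "finite F" "\<And>X. X \<in> F \<Longrightarrow> closed X \<and> interior X = {}"
  shows "interior (\<Union>F) = {}"
  using assms
proof (induction F rule: finite_induct)
  case empty then show ?case by simp
next
  case (insert X F)
  have "interior (X \<union> \<Union>F) = interior X"
    using insert by (intro interior_closed_Un_empty_interior) auto
  then show ?case using insert by simp
qed

lemma exists_good_point:
  assumes n: "is_norm N" and sc: "strictly_convex_norm N"
    and T: "finite T" and D: "finite D" "\<forall>r\<in>D. r > 0" and e: "\<epsilon> > 0"
  shows "\<exists>q. N (q - p) < \<epsilon> \<and> q \<notin> T \<and> (\<forall>a\<in>T. \<forall>r\<in>D. N (q - a) \<noteq> r)
           \<and> (\<forall>a\<in>T. \<forall>b\<in>T. a \<noteq> b \<longrightarrow> N (q - a) \<noteq> N (q - b))"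
proof -
  define F1 where "F1 = (\<lambda>a. {a}) ` T"
  define F2 where "F2 = (\<lambda>(a, r). {q. N (q - a) = r}) ` (T \<times> D)"
  define F3 where "F3 = (\<lambda>(a, b). {q. N (q - a) = N (q - b)}) ` {(a, b). a \<in> T \<and> b \<in> T \<and> a \<noteq> b}"
  define F where "F = F1 \<union> F2 \<union> F3"
  have fin3: "finite {(a, b). a \<in> T \<and> b \<in> T \<and> a \<noteq> b}"
    by (rule finite_subset[of _ "T \<times> T"]) (use T in auto)
  have "finite F" unfolding F_def F1_def F2_def F3_def using T D fin3 by auto
  moreover have "closed X \<and> interior X = {}" if "X \<in> F" for X
  proof -
    have cl: "closed {q. N (q - a) = r}" for a r
      using closed_Collect_eq[OF nrm_cont_shift[OF n] continuous_on_const] .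
    have cl2: "closed {q. N (q - a) = N (q - b)}" for a b
      using closed_Collect_eq[OF nrm_cont_shift[OF n] nrm_cont_shift[OF n]] .
    show ?thesis using that unfolding F_def F1_def F2_def F3_def
      using cl cl2 sphere_interior[OF n] bisector_interior[OF n sc] D(2) by auto
  qed
  ultimately have int: "interior (\<Union>F) = {}" by (rule interior_finite_Union)
  define V where "V = {q. N (q - p) < \<epsilon>}"
  have "open V" unfolding V_def
    using open_Collect_less[OF nrm_cont_shift[OF n] continuous_on_const] .
  moreover have "p \<in> V" unfolding V_def using e nrm_zero[OF n, of 0] by simp
  ultimately have "\<not> V \<subseteq> \<Union>F" using int interior_maximal by blast
  then obtain q where q: "q \<in> V" "q \<notin> \<Union>F" by blast
  show ?thesis
  proof (intro exI conjI)
    show "N (q - p) < \<epsilon>" using q unfolding V_def by simp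
    show "q \<notin> T" using q unfolding F_def F1_def by auto
    show "\<forall>a\<in>T. \<forall>r\<in>D. N (q - a) \<noteq> r" using q unfolding F_def F2_def by auto
    show "\<forall>a\<in>T. \<forall>b\<in>T. a \<noteq> b \<longrightarrow> N (q - a) \<noteq> N (q - b)"
      using q unfolding F_def F3_def by auto
  qed
qed

definition dd :: "(real^2 \<Rightarrow> real) \<Rightarrow> (real^2) set \<Rightarrow> bool" where
  "dd N T \<longleftrightarrow> (\<forall>a\<in>T. \<forall>b\<in>T. \<forall>c\<in>T. \<forall>d\<in>T.
              a \<noteq> b \<and> c \<noteq> d \<and> {a, b} \<noteq> {c, d} \<longrightarrow> N (a - b) \<noteq> N (c - d))"

lemma dd_insert:
  assumes n: "is_norm N" and dT: "dd N T" and qT: "q \<notin> T"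
    and hD: "\<forall>a\<in>T. \<forall>c\<in>T. \<forall>d\<in>T. c \<noteq> d \<longrightarrow> N (q - a) \<noteq> N (c - d)"
    and hB: "\<forall>a\<in>T. \<forall>b\<in>T. a \<noteq> b \<longrightarrow> N (q - a) \<noteq> N (q - b)"
  shows "dd N (insert q T)"
  unfolding dd_def
proof (intro ballI impI)
  fix a b c d assume abcd: "a \<in> insert q T" "b \<in> insert q T" "c \<in> insert q T" "d \<in> insert q T"
    and h: "a \<noteq> b \<and> c \<noteq> d \<and> {a, b} \<noteq> {c, d}"
  have sym: "N (x - y) = N (y - x)" for x y using nrm_neg[OF n] .
  have hD': "N (x - q) \<noteq> N (c' - d')" "N (c' - d') \<noteq> N (x - q)" "N (q - x) \<noteq> N (c' - d')" "N (c' - d') \<noteq> N (q - x)"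
    if "x \<in> T" "c' \<in> T" "d' \<in> T" "c' \<noteq> d'" for x c' d'
    using hD that sym by metis+
  have hB': "N (x - q) \<noteq> N (y - q)" "N (q - x) \<noteq> N (y - q)" "N (x - q) \<noteq> N (q - y)" "N (q - x) \<noteq> N (q - y)"
    if "x \<in> T" "y \<in> T" "x \<noteq> y" for x y
    using hB that sym by metis+
  show "N (a - b) \<noteq> N (c - d)"
  proof (cases "a = q \<or> b = q")
    case True
    show ?thesis
    proof (cases "c = q \<or> d = q")
      case True2: True
      show ?thesis using True True2 h abcd hB' by (auto simp: doubleton_eq_iff)
    next
      case False
      then show ?thesis using True h abcd hD' by auto
    qed
  next
    case False
    show ?thesis
    proof (cases "c = q \<or> d = q")
      case True2: True
      show ?thesis using False True2 h abcd hD' by auto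
    next
      case False2: False
      then show ?thesis using False h abcd dT unfolding dd_def by auto
    qed
  qed
qed

lemma main_ind:
  assumes n: "is_norm N" and sc: "strictly_convex_norm N" and e: "\<epsilon> > 0"
    and S: "finite S"
  shows "\<exists>f. inj_on f S \<and> (\<forall>p\<in>S. N (f p - p) < \<epsilon>) \<and> dd N (f ` S)"
  using S
proof (induction S rule: finite_induct)
  case empty
  show ?case by (auto simp: dd_def)
next
  case (insert x S)
  then obtain f where f: "inj_on f S" "\<forall>p\<in>S. N (f p - p) < \<epsilon>" "dd N (f ` S)" by blast
  define T where "T = f ` S"
  define P where "P = {(c, d). c \<in> T \<and> d \<in> T \<and> c \<noteq> d}"
  define D where "D = (\<lambda>(c, d). N (c - d)) ` P"
  have fT: "finite T" unfolding T_def using insert by simp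
  have "finite P" unfolding P_def
    by (rule finite_subset[of _ "T \<times> T"]) (use fT in auto)
  then have fD: "finite D" unfolding D_def by simp
  have pD: "\<forall>r\<in>D. r > 0"
  proof
    fix r assume "r \<in> D"
    then obtain c d where cd: "c \<noteq> d" "r = N (c - d)" unfolding D_def P_def by auto
    have "N (c - d) \<noteq> 0" using cd nrm_zero[OF n] by simp
    moreover have "N (c - d) \<ge> 0" using n unfolding is_norm_def by blast
    ultimately show "r > 0" using cd by simp
  qed
  obtain q where q: "N (q - x) < \<epsilon>" "q \<notin> T" "\<forall>a\<in>T. \<forall>r\<in>D. N (q - a) \<noteq> r"
      "\<forall>a\<in>T. \<forall>b\<in>T. a \<noteq> b \<longrightarrow> N (q - a) \<noteq> N (q - b)"
    using exists_good_point[OF n sc fT fD pD e, of x] by blast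
  have hD: "\<forall>a\<in>T. \<forall>c\<in>T. \<forall>d\<in>T. c \<noteq> d \<longrightarrow> N (q - a) \<noteq> N (c - d)"
  proof (intro ballI impI)
    fix a c d assume "a \<in> T" "c \<in> T" "d \<in> T" "c \<noteq> d"
    then have "N (c - d) \<in> D" unfolding D_def P_def by force
    then show "N (q - a) \<noteq> N (c - d)" using q(3) \<open>a \<in> T\<close> by blast
  qed
  define g where "g = f(x := q)"
  have gS: "g ` S = T" unfolding g_def T_def using insert(2) by (intro image_cong) auto
  have gi: "g ` insert x S = insert q T" by (simp only: image_insert gS) (simp add: g_def)
  show ?case
  proof (intro exI conjI)
    show "inj_on g (insert x S)"
    proof -
      have "inj_on g S" using f(1) insert(2) unfolding g_def inj_on_def by auto
      moreover have "g x \<notin> g ` (S - {x})" using gS q(2) insert(2) unfolding g_def by auto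
      ultimately show ?thesis by simp
    qed
    show "\<forall>p\<in>insert x S. N (g p - p) < \<epsilon>"
      using f(2) q(1) insert(2) unfolding g_def by auto
    show "dd N (g ` insert x S)"
      unfolding gi using dd_insert[OF n f(3)[folded T_def] q(2) hD q(4)] .
  qed
qed

theorem proposition6p2:
  fixes N :: "real^2 \<Rightarrow> real" and S :: "(real^2) set" and n :: nat and \<epsilon> :: real
  assumes "is_norm N" and "strictly_convex_norm N"
    and "finite S" and "card S = n"
    and "\<epsilon> > 0"
  shows "\<exists>S' f. bij_betw f S S' \<and>
           (\<forall>p\<in>S. N (f p - p) < \<epsilon>) \<and>
           (\<forall>a\<in>S'. \<forall>b\<in>S'. \<forall>c\<in>S'. \<forall>d\<in>S'.
              a \<noteq> b \<and> c \<noteq> d \<and> {a, b} \<noteq> {c, d} \<longrightarrow> N (a - b) \<noteq> N (c - d))"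
proof -
  obtain f where f: "inj_on f S" "\<forall>p\<in>S. N (f p - p) < \<epsilon>" "dd N (f ` S)"
    using main_ind[OF assms(1,2,5,3)] by blast
  show ?thesis
    by (rule exI[of _ "f ` S"], rule exI[of _ f])
      (use f in \<open>auto simp: bij_betw_def dd_def\<close>)
qed

end
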